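(* Let $k\ge2$, $C>0$, $\lambda_1,\dots,\lambda_k\in(0,1)$ with $\sum_i\lambda_i=1$, and let $V_1,\dots,V_k$ be measurable functions on $\mathbb{R}^n$ with $e^{-V_i}$ integrable, satisfying $$\sum_{i=1}^k\lambda_iV_i(x_i)\ge C\sum_{1\le i<j\le k}\lambda_i\lambda_j\langle x_i,x_j\rangle\quad\text{for all }x_1,\dots,x_k\in\mathbb{R}^n .$$ Let $(\lambda_1U_1,\dots,\lambda_kU_k)$ be a solution to the dual multimarginal problem with marginals $\mu_i=\frac{e^{-V_i}dx_i}{\int e^{-V_i}dx_i}$ and cost $c(x_1,\dots,x_k)=C\sum_{1\le i<j\le k}\lambda_i\lambda_j\langle x_i,x_j\rangle$. Then $$\prod_{i=1}^k\Bigl(\int e^{-V_i}dx_i\Bigr)^{\lambda_i}\le\prod_{i=1}^k\Bigl(\int e^{-U_i}dx_i\Bigr)^{\lambda_i}.$$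
   Context: The multimarginal Kantorovich maximization problem with marginals $\mu_1,\dots,\mu_k$ and cost $c$ is to maximize $\int c\,dP$ over probability measures $P$ on $(\mathbb{R}^n)^k$ with marginals $\mu_1,\dots,\mu_k$. Its dual problem is to minimize $\sum_{i=1}^k\int w_i\,d\mu_i$ over tuples $(w_1,\dots,w_k)$ of functions with $\sum_{i=1}^kw_i(x_i)\ge c(x_1,\dots,x_k)$ for all $x_1,\dots,x_k$; a solution is a minimizing tuple (at which equality $\sum_iw_i(x_i)=c(x_1,\dots,x_k)$ holds almost everywhere with respect to an optimal plan $P$). *)

theory Defs
  imports "HOL-Analysis.Analysis"
begin

definition mm_cost :: "nat \<Rightarrow> real \<Rightarrow> (nat \<Rightarrow> real) \<Rightarrow> (nat \<Rightarrow> 'a::real_inner) \<Rightarrow> real" where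
  "mm_cost k C lam x = C * (\<Sum>i<k. \<Sum>j\<in>{i<..<k}. lam i * lam j * inner (x i) (x j))"

definition gibbs_measure :: "('a::euclidean_space \<Rightarrow> real) \<Rightarrow> 'a measure" where
  "gibbs_measure V = density lborel
     (\<lambda>x. ennreal (exp (- V x) / (\<integral>y. exp (- V y) \<partial>lborel)))"

definition dual_admissible ::
  "nat \<Rightarrow> (nat \<Rightarrow> 'a measure) \<Rightarrow> ((nat \<Rightarrow> 'a) \<Rightarrow> real) \<Rightarrow> (nat \<Rightarrow> 'a \<Rightarrow> real) \<Rightarrow> bool" where
  "dual_admissible k \<mu> c w \<longleftrightarrow>
     (\<forall>i<k. integrable (\<mu> i) (w i)) \<and> (\<forall>x. c x \<le> (\<Sum>i<k. w i (x i)))"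

definition dual_value :: "nat \<Rightarrow> (nat \<Rightarrow> 'a measure) \<Rightarrow> (nat \<Rightarrow> 'a \<Rightarrow> real) \<Rightarrow> real" where
  "dual_value k \<mu> w = (\<Sum>i<k. \<integral>x. w i x \<partial>(\<mu> i))"

definition dual_solution ::
  "nat \<Rightarrow> (nat \<Rightarrow> 'a measure) \<Rightarrow> ((nat \<Rightarrow> 'a) \<Rightarrow> real) \<Rightarrow> (nat \<Rightarrow> 'a \<Rightarrow> real) \<Rightarrow> bool" where
  "dual_solution k \<mu> c w \<longleftrightarrow> dual_admissible k \<mu> c w \<and>
     (\<forall>w'. dual_admissible k \<mu> c w' \<longrightarrow> dual_value k \<mu> w \<le> dual_value k \<mu> w')"

end

theory Submission
  imports Defs "HOL-Probability.Probability"
begin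

lemma exp_abs_integrable: "integrable lborel (\<lambda>t::real. exp (- \<bar>t\<bar>))"
proof -
  have h: "integrable lborel (\<lambda>x::real. exp (-x) * indicator {0 ..} x)"
    using has_bochner_integral_I0i_power_exp_m'[of 0] by (simp add: integrable.intros)
  have h2: "integrable lborel (\<lambda>x::real. exp (-(0 + (-1) * x)) * indicator {0 ..} (0 + (-1) * x))"
    using lborel_integrable_real_affine[OF h, of "-1" 0] by simp
  have "integrable lborel (\<lambda>x::real. exp (-x) * indicator {0 ..} x + exp (-(0 + (-1) * x)) * indicator {0 ..} (0 + (-1) * x))"
    by (rule Bochner_Integration.integrable_add[OF h h2])
  then show ?thesis
    by (rule Bochner_Integration.integrable_bound) (auto split: split_indicator)
qed

lemma prod_exp_integrable:
  "integrable lborel (\<lambda>y::'a::euclidean_space. \<Prod>b\<in>Basis. exp (- \<bar>y \<bullet> b\<bar>))"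
proof -
  have fin: "(\<integral>\<^sup>+t. ennreal (exp (- \<bar>t\<bar>)) \<partial>lborel) = ennreal (\<integral>t. exp (- \<bar>t\<bar>) \<partial>lborel)"
    using exp_abs_integrable by (rule nn_integral_eq_integral) auto
  have "(\<integral>\<^sup>+y. ennreal (\<Prod>b\<in>Basis. exp (- \<bar>y \<bullet> b\<bar>)) \<partial>(lborel::'a measure))
      = (\<integral>\<^sup>+(y::'a). (\<Prod>b\<in>Basis. (\<lambda>b t. ennreal (exp (- \<bar>t\<bar>))) b (y \<bullet> b)) \<partial>lborel)"
    by (rule nn_integral_cong) (simp add: prod_ennreal)
  also have "\<dots> = (\<Prod>b\<in>(Basis::'a set). (\<integral>\<^sup>+t. ennreal (exp (- \<bar>t\<bar>)) \<partial>lborel))"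
    by (rule nn_integral_lborel_prod) auto
  also have "\<dots> = ennreal ((\<integral>t. exp (- \<bar>t\<bar>) \<partial>lborel) ^ DIM('a))"
    by (simp add: fin ennreal_power)
  finally show ?thesis
    by (intro integrableI_nn_integral_finite[where x="(\<integral>t. exp (- \<bar>t\<bar>) \<partial>lborel) ^ DIM('a)"]) (auto intro!: prod_nonneg)
qed

lemma sum_upper_Suc:
  fixes f :: "nat \<Rightarrow> nat \<Rightarrow> 'b::comm_monoid_add"
  shows "(\<Sum>i<Suc k. \<Sum>j\<in>{i<..<Suc k}. f i j) = (\<Sum>i<k. \<Sum>j\<in>{i<..<k}. f i j) + (\<Sum>i<k. f i k)"
proof -
  have "(\<Sum>i<k. \<Sum>j\<in>{i<..<Suc k}. f i j) = (\<Sum>i<k. (\<Sum>j\<in>{i<..<k}. f i j) + f i k)"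
  proof (rule sum.cong)
    fix i assume "i \<in> {..<k}"
    then have "{i<..<Suc k} = insert k {i<..<k}" by auto
    then show "(\<Sum>j\<in>{i<..<Suc k}. f i j) = (\<Sum>j\<in>{i<..<k}. f i j) + f i k"
      by (simp add: add.commute)
  qed simp
  moreover have "{k<..<Suc k} = {}" by auto
  ultimately show ?thesis by (simp add: sum.distrib)
qed

lemma cost_identity:
  fixes x :: "nat \<Rightarrow> 'a::real_inner" and lam :: "nat \<Rightarrow> real"
  shows "2 * (\<Sum>i<k. \<Sum>j\<in>{i<..<k}. lam i * lam j * inner (x i) (x j))
    = inner (\<Sum>i<k. lam i *\<^sub>R x i) (\<Sum>i<k. lam i *\<^sub>R x i) - (\<Sum>i<k. (lam i)^2 * inner (x i) (x i))"
proof (induction k)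
  case 0
  then show ?case by simp
next
  case (Suc k)
  have e: "inner (\<Sum>i<k. lam i *\<^sub>R x i) (x k) = (\<Sum>i<k. lam i * inner (x i) (x k))"
    by (simp add: inner_sum_left)
  show ?case
    unfolding sum_upper_Suc
    using Suc e
    by (simp add: algebra_simps inner_commute sum_distrib_left sum_distrib_right power2_eq_square)
qed

lemma growth:
  fixes V :: "nat \<Rightarrow> 'a::real_inner \<Rightarrow> real" and lam :: "nat \<Rightarrow> real"
  assumes ik: "i < k" and l0: "0 < lam i" and l1: "lam i < 1" and ls: "(\<Sum>j<k. lam j) = 1"
    and C: "C > 0"
    and hyp: "\<forall>x :: nat \<Rightarrow> 'a. (\<Sum>j<k. lam j * V j (x j)) \<ge> mm_cost k C lam x"
  shows "\<exists>K. \<forall>y. inner y w - K \<le> V i y"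
proof -
  define c where "c = C * (1 - lam i)"
  have c0: "c > 0" using C l1 by (simp add: c_def)
  define u where "u = w /\<^sub>R c"
  define A where "A = (\<Sum>j<k. (lam j)^2)"
  define E where "E = (\<Sum>j<k. lam j * V j u) - lam i * V i u"
  define D where "D = C / 2 * (inner u u - 2 * lam i * inner u u + (lam i)^2 * inner u u
      - A * inner u u + (lam i)^2 * inner u u)"
  have iin: "i \<in> {..<k}" using ik by simp
  have main: "inner y w - (E - D) / lam i \<le> V i y" for y
  proof -
    define x where "x = (\<lambda>j. if j = i then y else u)"
    have x': "x j = u + (if j = i then y - u else 0)" for j by (simp add: x_def)
    have s1: "(\<Sum>j<k. lam j *\<^sub>R x j) = u + lam i *\<^sub>R (y - u)"
    proof -
      have "(\<Sum>j<k. lam j *\<^sub>R x j) = (\<Sum>j<k. lam j *\<^sub>R u + (if j = i then lam j *\<^sub>R (y - u) else 0))"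
        by (rule sum.cong) (auto simp: x' scaleR_right_distrib)
      also have "\<dots> = (\<Sum>j<k. lam j) *\<^sub>R u + lam i *\<^sub>R (y - u)"
        using iin by (simp add: sum.distrib scaleR_sum_left)
      finally show ?thesis using ls by simp
    qed
    have s2: "(\<Sum>j<k. (lam j)^2 * inner (x j) (x j)) = A * inner u u + (lam i)^2 * (inner y y - inner u u)"
    proof -
      have "(\<Sum>j<k. (lam j)^2 * inner (x j) (x j)) = (\<Sum>j<k. (lam j)^2 * inner u u + (if j = i then (lam j)^2 * (inner y y - inner u u) else 0))"
        by (rule sum.cong) (auto simp: x_def algebra_simps)
      also have "\<dots> = A * inner u u + (lam i)^2 * (inner y y - inner u u)"
        using iin by (simp add: sum.distrib sum_distrib_right A_def)
      finally show ?thesis .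
    qed
    have s3: "(\<Sum>j<k. lam j * V j (x j)) = E + lam i * V i y"
    proof -
      have "(\<Sum>j<k. lam j * V j (x j)) = (\<Sum>j<k. lam j * V j u + (if j = i then lam j * (V j y - V j u) else 0))"
        by (rule sum.cong) (auto simp: x_def algebra_simps)
      also have "\<dots> = E + lam i * V i y"
        using iin by (simp add: sum.distrib E_def algebra_simps)
      finally show ?thesis .
    qed
    have "2 * mm_cost k C lam x = C * (inner (u + lam i *\<^sub>R (y - u)) (u + lam i *\<^sub>R (y - u))
        - (A * inner u u + (lam i)^2 * (inner y y - inner u u)))"
    proof -
      have ci: "2 * (\<Sum>i<k. \<Sum>j\<in>{i<..<k}. lam i * lam j * inner (x i) (x j)) = inner (u + lam i *\<^sub>R (y - u)) (u + lam i *\<^sub>R (y - u))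
        - (A * inner u u + (lam i)^2 * (inner y y - inner u u))"
        using cost_identity[where k=k and lam=lam and x=x] unfolding s1 s2 .
      have "2 * mm_cost k C lam x = C * (2 * (\<Sum>i<k. \<Sum>j\<in>{i<..<k}. lam i * lam j * inner (x i) (x j)))"
        by (simp add: mm_cost_def)
      then show ?thesis unfolding ci .
    qed
    also have "\<dots> = 2 * (c * lam i * inner y u + D)"
      by (simp add: c_def D_def algebra_simps inner_commute power2_eq_square)
    finally have cst: "mm_cost k C lam x = c * lam i * inner y u + D" by simp
    have "c * lam i * inner y u + D \<le> E + lam i * V i y"
      using hyp[rule_format, of x] cst s3 by simp
    moreover have "c * inner y u = inner y w"
      using c0 by (simp add: u_def)
    moreover have "c * lam i * inner y u = lam i * (c * inner y u)" by (simp only: mult_ac)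
    ultimately have h: "lam i * inner y w + D \<le> E + lam i * V i y"
      by simp
    have "lam i * (inner y w - (E - D) / lam i) = lam i * inner y w - (E - D)"
      using l0 by (simp add: right_diff_distrib field_simps)
    with h have "lam i * (inner y w - (E - D) / lam i) \<le> lam i * V i y" by simp
    then show ?thesis using l0 by (simp add: mult_le_cancel_left_pos)
  qed
  then show ?thesis by blast
qed

lemma V_integrable:
  fixes V :: "'a::euclidean_space \<Rightarrow> real"
  assumes meas: "V \<in> borel_measurable lborel"
    and int: "integrable lborel (\<lambda>x. exp (- V x))"
    and gr: "\<forall>w. \<exists>K. \<forall>y. inner y w - K \<le> V y"
  shows "integrable lborel (\<lambda>x. exp (- V x) * V x)"
proof -
  define n where "n = real DIM('a)"
  have n0: "n > 0" by (simp add: n_def)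
  define R where "R = 2 * n"
  have "\<forall>b. \<exists>K. \<forall>y. R * \<bar>y \<bullet> b\<bar> - K \<le> V y"
  proof
    fix b :: 'a
    obtain K1 where K1: "\<forall>y. inner y (R *\<^sub>R b) - K1 \<le> V y" using gr by blast
    obtain K2 where K2: "\<forall>y. inner y (- (R *\<^sub>R b)) - K2 \<le> V y" using gr by blast
    have "\<forall>y. R * \<bar>y \<bullet> b\<bar> - max K1 K2 \<le> V y"
    proof
      fix y
      have a: "R * (y \<bullet> b) - K1 \<le> V y" "- (R * (y \<bullet> b)) - K2 \<le> V y"
        using K1[rule_format, of y] K2[rule_format, of y] by (auto simp: inner_commute)
      show "R * \<bar>y \<bullet> b\<bar> - max K1 K2 \<le> V y"
        using a by (cases "y \<bullet> b \<ge> 0") (auto simp: abs_if)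
    qed
    then show "\<exists>K. \<forall>y. R * \<bar>y \<bullet> b\<bar> - K \<le> V y" by blast
  qed
  then obtain K where K: "\<And>b y. R * \<bar>y \<bullet> b\<bar> - K b \<le> V y" by metis
  define K0 where "K0 = (\<Sum>b\<in>Basis. K b) / n"
  have lb: "2 * (\<Sum>b\<in>(Basis::'a set). \<bar>y \<bullet> b\<bar>) - K0 \<le> V y" for y
  proof -
    have "(\<Sum>b\<in>(Basis::'a set). R * \<bar>y \<bullet> b\<bar> - K b) \<le> (\<Sum>b\<in>(Basis::'a set). V y)"
      by (rule sum_mono) (rule K)
    then have "R * (\<Sum>b\<in>(Basis::'a set). \<bar>y \<bullet> b\<bar>) - (\<Sum>b\<in>Basis. K b) \<le> n * V y"
      by (simp add: sum_subtractf sum_distrib_left n_def)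
    then have "n * (2 * (\<Sum>b\<in>(Basis::'a set). \<bar>y \<bullet> b\<bar>) - K0) \<le> n * V y"
      using n0 by (simp add: R_def K0_def algebra_simps)
    then show ?thesis using n0 by (simp add: mult_le_cancel_left_pos)
  qed
  have lb0: "- K0 \<le> V y" for y
    using lb[of y] by (smt (verit) sum_nonneg abs_ge_zero)
  define M where "M = max 0 K0"
  define G where "G = (\<lambda>y::'a. \<Prod>b\<in>Basis. exp (- \<bar>y \<bullet> b\<bar>))"
  have G: "G y = exp (- (\<Sum>b\<in>Basis. \<bar>y \<bullet> b\<bar>))" for y
    by (simp add: G_def exp_sum[symmetric] sum_negf)
  have bound: "norm (exp (- V y) * V y) \<le> norm (M * exp (- V y) + 2 * exp (K0 / 2) * G y)" for y
  proof (cases "V y \<ge> 0")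
    case True
    have e1: "V y / 2 \<le> exp (V y / 2)" using exp_ge_add_one_self[of "V y / 2"] by linarith
    have "exp (- V y) * V y = 2 * (exp (- V y) * (V y / 2))" by simp
    also have "\<dots> \<le> 2 * (exp (- V y) * exp (V y / 2))"
      using e1 by (intro mult_left_mono) auto
    also have "exp (- V y) * exp (V y / 2) = exp (- (V y / 2))" by (simp add: exp_add[symmetric])
    also have "exp (- (V y / 2)) \<le> exp (K0 / 2 - (\<Sum>b\<in>Basis. \<bar>y \<bullet> b\<bar>))"
      using lb[of y] by simp
    also have "\<dots> = exp (K0 / 2) * G y" unfolding G exp_add[symmetric] by simp
    finally have "exp (- V y) * V y \<le> 2 * (exp (K0 / 2) * G y)" by simp
    moreover have "0 \<le> M * exp (- V y)" by (simp add: M_def)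
    moreover have "0 \<le> G y" by (simp add: G)
    ultimately show ?thesis using True by simp
  next
    case False
    have "- V y \<le> M" using lb0[of y] by (simp add: M_def)
    then have "exp (- V y) * (- V y) \<le> exp (- V y) * M" by (intro mult_left_mono) auto
    moreover have "0 \<le> G y" by (simp add: G)
    moreover have "0 \<le> M" by (simp add: M_def)
    ultimately have a: "0 \<le> 2 * exp (K0 / 2) * G y" and b: "- (exp (- V y) * V y) \<le> M * exp (- V y)"
      by (auto simp: mult.commute)
    have "norm (exp (- V y) * V y) = - (exp (- V y) * V y)" using False by (simp add: abs_mult)
    also have "\<dots> \<le> M * exp (- V y) + 2 * exp (K0 / 2) * G y" using a b by linarith
    also have "\<dots> \<le> norm (M * exp (- V y) + 2 * exp (K0 / 2) * G y)" by simp
    finally show ?thesis .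
  qed
  have "integrable lborel (\<lambda>y. M * exp (- V y) + 2 * exp (K0 / 2) * G y)"
    using int prod_exp_integrable by (auto simp: G_def)
  then show ?thesis
    by (rule Bochner_Integration.integrable_bound) (use meas bound in auto)
qed

theorem mainTheorem15:
  fixes k :: nat and C :: real and lam :: "nat \<Rightarrow> real"
    and V U :: "nat \<Rightarrow> 'a::euclidean_space \<Rightarrow> real"
  assumes "k \<ge> 2" and "C > 0"
    and "\<forall>i<k. 0 < lam i \<and> lam i < 1" and "(\<Sum>i<k. lam i) = 1"
    and "\<forall>i<k. V i \<in> borel_measurable lborel"
    and "\<forall>i<k. integrable lborel (\<lambda>x. exp (- V i x))"
    and "\<forall>x :: nat \<Rightarrow> 'a. (\<Sum>i<k. lam i * V i (x i)) \<ge> mm_cost k C lam x"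
    and "dual_solution k (\<lambda>i. gibbs_measure (V i)) (mm_cost k C lam) (\<lambda>i y. lam i * U i y)"
  shows "(\<forall>i<k. (\<integral>\<^sup>+ x. ennreal (exp (- U i x)) \<partial>lborel) < \<infinity>) \<longrightarrow>
    (\<Prod>i<k. (\<integral>x. exp (- V i x) \<partial>lborel) powr lam i)
      \<le> (\<Prod>i<k. enn2real (\<integral>\<^sup>+ x. ennreal (exp (- U i x)) \<partial>lborel) powr lam i)"
proof
  assume Ufin: "\<forall>i<k. (\<integral>\<^sup>+ x. ennreal (exp (- U i x)) \<partial>lborel) < \<infinity>"
  note lamA = assms(3) and Vmeas = assms(5) and Vint = assms(6)
  define Z where "Z = (\<lambda>i. \<integral>x. exp (- V i x) \<partial>lborel)"
  define p where "p = (\<lambda>i x. exp (- V i x) / Z i)"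
  define W where "W = (\<lambda>i. \<integral>x. exp (- U i x) \<partial>lborel)"
  have gm: "gibbs_measure (V i) = density lborel (\<lambda>x. ennreal (p i x))" for i
    by (simp add: gibbs_measure_def p_def Z_def)
  have sol: "dual_admissible k (\<lambda>i. gibbs_measure (V i)) (mm_cost k C lam) (\<lambda>i y. lam i * U i y)"
    "\<And>w'. dual_admissible k (\<lambda>i. gibbs_measure (V i)) (mm_cost k C lam) w' \<Longrightarrow>
       dual_value k (\<lambda>i. gibbs_measure (V i)) (\<lambda>i y. lam i * U i y) \<le> dual_value k (\<lambda>i. gibbs_measure (V i)) w'"
    using assms(8) unfolding dual_solution_def by auto
  have Zpos: "Z i > 0" if "i < k" for i
  proof -
    have "Z i \<noteq> 0"
    proof
      assume "Z i = 0"
      then have "AE x in lborel. exp (- V i x) = 0"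
        using integral_nonneg_eq_0_iff_AE[of lborel "\<lambda>x. exp (- V i x)"] Vint that
        by (simp add: Z_def)
      then have "AE x in (lborel::'a measure). False" by simp
      then show False by (subst (asm) AE_iff_measurable[of UNIV]) auto
    qed
    moreover have "Z i \<ge> 0" by (simp add: Z_def)
    ultimately show ?thesis by simp
  qed
  have pmeas[measurable]: "p i \<in> borel_measurable lborel" if "i < k" for i
  proof -
    have [measurable]: "V i \<in> borel_measurable borel" using Vmeas that by simp
    show ?thesis unfolding p_def by measurable
  qed
  have pnn: "0 \<le> p i x" if "i < k" for i x using Zpos[OF that] by (simp add: p_def)
  have pint: "integrable lborel (p i)" "(\<integral>x. p i x \<partial>lborel) = 1" if "i < k" for i
    using Vint that Zpos[OF that] by (auto simp: p_def Z_def)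
  have pV: "integrable lborel (\<lambda>x. p i x * V i x)" if "i < k" for i
  proof -
    have gr: "\<forall>w. \<exists>K. \<forall>y. inner y w - K \<le> V i y"
      using growth[of i k lam C V] that lamA assms(2,4,7) by blast
    have "integrable lborel (\<lambda>x. exp (- V i x) * V i x)"
      using V_integrable[OF _ _ gr] Vmeas Vint that by blast
    then have "integrable lborel (\<lambda>x. (exp (- V i x) * V i x) / Z i)" by simp
    then show ?thesis by (simp add: p_def)
  qed
  have Umeas[measurable]: "U i \<in> borel_measurable lborel" and pU: "integrable lborel (\<lambda>x. p i x * U i x)"
    if "i < k" for i
  proof -
    have "integrable (gibbs_measure (V i)) (\<lambda>y. lam i * U i y)"
      using sol(1) that unfolding dual_admissible_def by auto
    then have m: "(\<lambda>y. lam i * U i y) \<in> borel_measurable lborel"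
      unfolding gm by (auto dest: borel_measurable_integrable)
    have "(\<lambda>y. (1 / lam i) * (lam i * U i y)) \<in> borel_measurable lborel"
      using m by measurable
    moreover have ln0: "lam i \<noteq> 0" using lamA that by auto
    ultimately show Um: "U i \<in> borel_measurable lborel" by simp
    have "integrable lborel (\<lambda>x. p i x *\<^sub>R (lam i * U i x))"
      using \<open>integrable (gibbs_measure (V i)) (\<lambda>y. lam i * U i y)\<close> unfolding gm
      by (subst (asm) integrable_density) (use Um pmeas[OF that] pnn[OF that] in auto)
    then have "integrable lborel (\<lambda>x. (1 / lam i) * (p i x * (lam i * U i x)))"
      by (intro integrable_mult_right) simp
    moreover have "(\<lambda>x. (1 / lam i) * (p i x * (lam i * U i x))) = (\<lambda>x. p i x * U i x)"
      using ln0 by (auto simp: fun_eq_iff)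
    ultimately show "integrable lborel (\<lambda>x. p i x * U i x)" by simp
  qed
  have Uint: "integrable lborel (\<lambda>x. exp (- U i x))" and Weq: "enn2real (\<integral>\<^sup>+ x. ennreal (exp (- U i x)) \<partial>lborel) = W i"
    if "i < k" for i
  proof -
    show I: "integrable lborel (\<lambda>x. exp (- U i x))"
      by (rule integrableI_bounded) (use Umeas[OF that] Ufin that in auto)
    have "(\<integral>\<^sup>+ x. ennreal (exp (- U i x)) \<partial>lborel) = ennreal (W i)"
      unfolding W_def using I by (rule nn_integral_eq_integral) auto
    then show "enn2real (\<integral>\<^sup>+ x. ennreal (exp (- U i x)) \<partial>lborel) = W i"
      by (simp add: W_def)
  qed
  show "(\<Prod>i<k. (\<integral>x. exp (- V i x) \<partial>lborel) powr lam i)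
      \<le> (\<Prod>i<k. enn2real (\<integral>\<^sup>+ x. ennreal (exp (- U i x)) \<partial>lborel) powr lam i)"
  proof -
    have intd: "(\<integral>y. lam i * f y \<partial>gibbs_measure (V i)) = lam i * (\<integral>x. p i x * f x \<partial>lborel)"
      if "i < k" and fm: "f \<in> borel_measurable lborel" for i f
    proof -
      have "(\<integral>y. lam i * f y \<partial>gibbs_measure (V i)) = (\<integral>x. p i x *\<^sub>R (lam i * f x) \<partial>lborel)"
        unfolding gm by (rule integral_density) (use fm pmeas[OF that(1)] pnn[OF that(1)] in auto)
      also have "\<dots> = (\<integral>x. lam i * (p i x * f x) \<partial>lborel)"
        by (simp add: algebra_simps)
      also have "\<dots> = lam i * (\<integral>x. p i x * f x \<partial>lborel)" by simp
      finally show ?thesis .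
    qed
    have Vadm: "dual_admissible k (\<lambda>i. gibbs_measure (V i)) (mm_cost k C lam) (\<lambda>i y. lam i * V i y)"
      unfolding dual_admissible_def
    proof (intro conjI allI impI)
      fix i assume i: "i < k"
      have "integrable lborel (\<lambda>x. lam i * (p i x * V i x))"
        using pV[OF i] by (rule integrable_mult_right)
      then have "integrable lborel (\<lambda>x. p i x *\<^sub>R (lam i * V i x))"
        by (simp add: algebra_simps)
      then show "integrable (gibbs_measure (V i)) (\<lambda>y. lam i * V i y)"
        unfolding gm by (subst integrable_density) (use Vmeas i pmeas[OF i] pnn[OF i] in auto)
    next
      fix x :: "nat \<Rightarrow> 'a"
      show "mm_cost k C lam x \<le> (\<Sum>i<k. lam i * V i (x i))" using assms(7) by blast
    qed
    define a where "a = (\<lambda>i. (\<integral>x. p i x * U i x \<partial>lborel) - (\<integral>x. p i x * V i x \<partial>lborel))"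
    have suma: "(\<Sum>i<k. lam i * a i) \<le> 0"
    proof -
      have "dual_value k (\<lambda>i. gibbs_measure (V i)) (\<lambda>i y. lam i * U i y)
          \<le> dual_value k (\<lambda>i. gibbs_measure (V i)) (\<lambda>i y. lam i * V i y)"
        by (rule sol(2)[OF Vadm])
      moreover have "dual_value k (\<lambda>i. gibbs_measure (V i)) (\<lambda>i y. lam i * U i y) = (\<Sum>i<k. lam i * (\<integral>x. p i x * U i x \<partial>lborel))"
        unfolding dual_value_def by (intro sum.cong refl intd) (auto intro: Umeas)
      moreover have "dual_value k (\<lambda>i. gibbs_measure (V i)) (\<lambda>i y. lam i * V i y) = (\<Sum>i<k. lam i * (\<integral>x. p i x * V i x \<partial>lborel))"
        unfolding dual_value_def by (intro sum.cong refl intd) (use Vmeas in auto)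
      ultimately have "(\<Sum>i<k. lam i * (\<integral>x. p i x * U i x \<partial>lborel)) \<le> (\<Sum>i<k. lam i * (\<integral>x. p i x * V i x \<partial>lborel))"
        by simp
      then show ?thesis by (simp add: a_def right_diff_distrib sum_subtractf)
    qed
    have jen: "Z i * exp (- a i) \<le> W i" if i: "i < k" for i
    proof -
      have pt: "Z i * exp (- a i) * ((1 + a i) * p i x + p i x * V i x - p i x * U i x) \<le> exp (- U i x)" for x
      proof -
        have e: "exp (- U i x) = Z i * p i x * exp (V i x - U i x)"
          using Zpos[OF i] by (simp add: p_def exp_diff exp_minus field_simps)
        have "exp (- a i) * (1 + (V i x - U i x) + a i) \<le> exp (V i x - U i x)"
        proof -
          have "1 + (V i x - U i x + a i) \<le> exp (V i x - U i x + a i)" by (rule exp_ge_add_one_self)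
          then have "exp (- a i) * (1 + (V i x - U i x + a i)) \<le> exp (- a i) * exp (V i x - U i x + a i)"
            by (intro mult_left_mono) auto
          also have "\<dots> = exp (V i x - U i x)" by (simp add: exp_add[symmetric])
          finally show ?thesis by (simp add: add.assoc)
        qed
        then have "Z i * p i x * (exp (- a i) * (1 + (V i x - U i x) + a i)) \<le> Z i * p i x * exp (V i x - U i x)"
          using Zpos[OF i] pnn[OF i] by (intro mult_left_mono) auto
        then show ?thesis unfolding e by (simp add: algebra_simps)
      qed
      have I: "integrable lborel (\<lambda>x. Z i * exp (- a i) * ((1 + a i) * p i x + p i x * V i x - p i x * U i x))"
        using pint(1)[OF i] pV[OF i] pU[OF i] by auto
      have le: "(\<integral>x. Z i * exp (- a i) * ((1 + a i) * p i x + p i x * V i x - p i x * U i x) \<partial>lborel) \<le> W i"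
        unfolding W_def by (rule integral_mono[OF I Uint[OF i]]) (rule pt)
      have eq: "(\<integral>x. Z i * exp (- a i) * ((1 + a i) * p i x + p i x * V i x - p i x * U i x) \<partial>lborel)
          = Z i * exp (- a i)"
        using pint[OF i] pV[OF i] pU[OF i] by (simp add: a_def)
      show ?thesis using le eq by linarith
    qed
    have lnW: "ln (Z i) - a i \<le> ln (W i)" and Wpos: "W i > 0" if i: "i < k" for i
    proof -
      have zp: "Z i * exp (- a i) > 0" using Zpos[OF i] by simp
      then show "W i > 0" using jen[OF i] by linarith
      have "ln (Z i * exp (- a i)) \<le> ln (W i)" using zp jen[OF i] by simp
      then show "ln (Z i) - a i \<le> ln (W i)" using Zpos[OF i] by (simp add: ln_mult)
    qed
    have "(\<Prod>i<k. (\<integral>x. exp (- V i x) \<partial>lborel) powr lam i) = exp (\<Sum>i<k. lam i * ln (Z i))"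
    proof -
      have "(\<Prod>i<k. (\<integral>x. exp (- V i x) \<partial>lborel) powr lam i) = (\<Prod>i<k. exp (lam i * ln (Z i)))"
      proof (rule prod.cong[OF refl])
        fix i assume "i \<in> {..<k}"
        then have "Z i > 0" by (intro Zpos) simp
        then show "(\<integral>x. exp (- V i x) \<partial>lborel) powr lam i = exp (lam i * ln (Z i))"
          by (simp add: powr_def Z_def mult.commute)
      qed
      then show ?thesis by (simp add: exp_sum)
    qed
    also have "\<dots> \<le> exp (\<Sum>i<k. lam i * ln (W i))"
    proof -
      have "(\<Sum>i<k. lam i * ln (Z i)) + (- (\<Sum>i<k. lam i * a i)) \<le> (\<Sum>i<k. lam i * ln (W i))"
      proof -
        have "(\<Sum>i<k. lam i * (ln (Z i) - a i)) \<le> (\<Sum>i<k. lam i * ln (W i))"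
          using lnW lamA by (intro sum_mono mult_left_mono) auto
        then show ?thesis by (simp add: right_diff_distrib sum_subtractf)
      qed
      then show ?thesis using suma by simp
    qed
    also have "\<dots> = (\<Prod>i<k. enn2real (\<integral>\<^sup>+ x. ennreal (exp (- U i x)) \<partial>lborel) powr lam i)"
    proof -
      have "(\<Prod>i<k. enn2real (\<integral>\<^sup>+ x. ennreal (exp (- U i x)) \<partial>lborel) powr lam i) = (\<Prod>i<k. exp (lam i * ln (W i)))"
      proof (rule prod.cong[OF refl])
        fix i assume "i \<in> {..<k}"
        then have "W i > 0" "enn2real (\<integral>\<^sup>+ x. ennreal (exp (- U i x)) \<partial>lborel) = W i"
          by (auto intro: Wpos Weq)
        then show "enn2real (\<integral>\<^sup>+ x. ennreal (exp (- U i x)) \<partial>lborel) powr lam i = exp (lam i * ln (W i))"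
          by (simp add: powr_def mult.commute)
      qed
      then show ?thesis by (simp add: exp_sum)
    qed
    finally show ?thesis .
  qed
qed

end
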